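(* Let $n\geq4$ and let $U,V$ be monomials. Then $U,V\in F(J(P_{n-2})^2)$ if and only if $x_{n-1}^2U,\,x_{n-1}^2V\in F(J(P_n)^2)$. Moreover, in that case $U>_{\mathcal R}V$ (rooted order on $F(J(P_{n-2})^2)$) if and only if $x_{n-1}^2U>_{\mathcal R}x_{n-1}^2V$ (rooted order on $F(J(P_n)^2)$).
   Context: Let $K$ be a field. For $m\geq 1$, $P_m$ is the path graph on vertices $x_1,\ldots,x_m$ with edges $\{x_i,x_{i+1}\}$. The cover ideal $J(P_m)$ is generated by the monomials $\prod_{x\in C}x$ with $C$ a minimal vertex cover of $P_m$. For a monomial ideal $I$, $G(I)$ is its set of minimal monomial generators and $F(I^2)=\{uv:u,v\in G(I)\}$. The rooted list $\mathcal R(P_m)$ is defined recursively: $\mathcal R(P_1)$ empty; $\mathcal R(P_2)=x_1,x_2$; $\mathcal R(P_3)=x_2,x_1x_3$; $\mathcal R(P_4)=x_1x_3,x_2x_3,x_2x_4$; for $m\geq5$, if $\mathcal R(P_{m-2})=u_1,\ldots,u_r$ and $\mathcal R(P_{m-3})=v_1,\ldots,v_s$, then $\mathcal R(P_m)=x_{m-1}u_1,\ldots,x_{m-1}u_r,x_mx_{m-2}v_1,\ldots,x_mx_{m-2}v_s$; it lists each element of $G(J(P_m))$ once. With $\mathcal R(P_m)=u_1,\ldots,u_q$, each $M\in F(J(P_m)^2)$ can be written $u_1^{a_1}\cdots u_q^{a_q}$ with $a_i\geq0$, $\sum a_i=2$; the maximal expression of $M$ is the one with lexicographically largest exponent vector.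 The rooted order on $F(J(P_m)^2)$: $M>_{\mathcal R}N$ iff the exponent vector of the maximal expression of $M$ is lexicographically larger than that of $N$. *)

theory Defs
  imports Main "HOL-Library.Multiset" "HOL-Library.List_Lexorder"
begin

text \<open>Monomials in variables x_1, x_2, ... are represented as multisets of variable
indices (the multiset of x_i occurring with multiplicity); multiplication of monomials
is multiset sum.\<close>

type_synonym monomial = "nat multiset"

text \<open>Vertex covers of the path graph P_m on x_1..x_m with edges {x_i, x_(i+1)}.\<close>
definition vertex_cover :: "nat \<Rightarrow> nat set \<Rightarrow> bool" where
  "vertex_cover m C \<longleftrightarrow> C \<subseteq> {1..m} \<and> (\<forall>i. 1 \<le> i \<and> i < m \<longrightarrow> i \<in> C \<or> Suc i \<in> C)"

definition min_vertex_cover :: "nat \<Rightarrow> nat set \<Rightarrow> bool" where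
  "min_vertex_cover m C \<longleftrightarrow> vertex_cover m C \<and> (\<forall>D. D \<subset> C \<longrightarrow> \<not> vertex_cover m D)"

text \<open>G(J(P_m)): the minimal generators of the cover ideal, i.e. the squarefree monomials
of the minimal vertex covers (these are pairwise incomparable, hence exactly G(J(P_m))).\<close>
definition Gens :: "nat \<Rightarrow> monomial set" where
  "Gens m = {mset_set C | C. min_vertex_cover m C}"

definition F2 :: "nat \<Rightarrow> monomial set" where
  "F2 m = {u + v | u v. u \<in> Gens m \<and> v \<in> Gens m}"

fun rooted_list :: "nat \<Rightarrow> monomial list" where
  "rooted_list 0 = []"
| "rooted_list (Suc 0) = []"
| "rooted_list (Suc (Suc 0)) = [{#1#}, {#2#}]"
| "rooted_list (Suc (Suc (Suc 0))) = [{#2#}, {#1, 3#}]"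
| "rooted_list (Suc (Suc (Suc (Suc 0)))) = [{#1, 3#}, {#2, 3#}, {#2, 4#}]"
| "rooted_list (Suc (Suc (Suc (Suc (Suc k))))) =
     map (\<lambda>u. add_mset (k + 4) u) (rooted_list (k + 3)) @
     map (\<lambda>v. add_mset (k + 5) (add_mset (k + 3) v)) (rooted_list (k + 2))"

definition expressions :: "nat \<Rightarrow> monomial \<Rightarrow> nat list set" where
  "expressions m M = {a. length a = length (rooted_list m) \<and> sum_list a = 2 \<and>
      M = sum_list (map2 repeat_mset a (rooted_list m))}"

text \<open>Exponent vector of the maximal expression: the lexicographically largest one
(all vectors have the same length, so List_Lexorder is the usual lex order).\<close>
definition max_expression :: "nat \<Rightarrow> monomial \<Rightarrow> nat list" where
  "max_expression m M = Max (expressions m M)"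

definition rooted_gt :: "nat \<Rightarrow> monomial \<Rightarrow> monomial \<Rightarrow> bool" where
  "rooted_gt m M N \<longleftrightarrow> max_expression m N < max_expression m M"

end

theory Submission
  imports Defs
begin

lemma vc_finite: "vertex_cover m C \<Longrightarrow> finite C"
  unfolding vertex_cover_def using finite_subset by blast

lemma mvc_iff: "min_vertex_cover m C \<longleftrightarrow> vertex_cover m C \<and> (\<forall>i\<in>C. \<not> vertex_cover m (C - {i}))"
proof
  assume "min_vertex_cover m C" thus "vertex_cover m C \<and> (\<forall>i\<in>C. \<not> vertex_cover m (C - {i}))"
    unfolding min_vertex_cover_def by blast
next
  assume a: "vertex_cover m C \<and> (\<forall>i\<in>C. \<not> vertex_cover m (C - {i}))"
  show "min_vertex_cover m C" unfolding min_vertex_cover_def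
  proof (intro conjI allI impI)
    show "vertex_cover m C" using a by blast
    fix D assume "D \<subset> C"
    then obtain i where i: "i \<in> C" "i \<notin> D" by blast
    show "\<not> vertex_cover m D"
    proof
      assume "vertex_cover m D"
      have "vertex_cover m (C - {i})" unfolding vertex_cover_def
      proof (intro conjI allI impI)
        show "C - {i} \<subseteq> {1..m}" using a unfolding vertex_cover_def by blast
        fix j assume "1 \<le> j \<and> j < m"
        hence "j \<in> D \<or> Suc j \<in> D" using \<open>vertex_cover m D\<close> unfolding vertex_cover_def by blast
        thus "j \<in> C - {i} \<or> Suc j \<in> C - {i}" using i \<open>D \<subset> C\<close> by auto
      qed
      thus False using a i by blast
    qed
  qed
qed

lemma mvc_ins:
  assumes "min_vertex_cover N C"
  shows "min_vertex_cover (N+2) (insert (N+1) C)"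
proof -
  have vc: "vertex_cover N C" and mn: "\<forall>i\<in>C. \<not> vertex_cover N (C - {i})" using assms mvc_iff by auto
  have sub: "C \<subseteq> {1..N}" using vc vertex_cover_def by auto
  have "vertex_cover (N+2) (insert (N+1) C)"
    unfolding vertex_cover_def
  proof (intro conjI allI impI)
    show "insert (N + 1) C \<subseteq> {1..N + 2}" using sub by auto
    fix i assume "1 \<le> i \<and> i < N + 2"
    thus "i \<in> insert (N + 1) C \<or> Suc i \<in> insert (N + 1) C"
      using vc unfolding vertex_cover_def by (cases "i < N") auto
  qed
  moreover have "\<not> vertex_cover (N+2) (insert (N+1) C - {i})" if "i \<in> insert (N+1) C" for i
  proof (cases "i = N+1")
    case True
    have "N+1 \<notin> insert (N+1) C - {i}" "N+2 \<notin> insert (N+1) C - {i}" using True sub by auto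
    then show ?thesis unfolding vertex_cover_def
      by (metis Suc_eq_plus1 add_2_eq_Suc' le_add2 lessI)
  next
    case False
    hence iC: "i \<in> C" using that by auto
    have "\<not> vertex_cover N (C - {i})" using mn iC by blast
    moreover have "C - {i} \<subseteq> {1..N}" using sub by auto
    ultimately obtain j where j: "1 \<le> j" "j < N" "j \<notin> C - {i}" "Suc j \<notin> C - {i}"
      unfolding vertex_cover_def by auto
    show ?thesis unfolding vertex_cover_def
      using j False by (auto intro!: exI[of _ j])
  qed
  ultimately show ?thesis using mvc_iff by blast
qed

lemma mvc_del:
  assumes "min_vertex_cover (N+2) C" "N+1 \<in> C"
  shows "min_vertex_cover N (C - {N+1})" "N+2 \<notin> C"
proof -
  have vc: "vertex_cover (N+2) C" and mn: "\<forall>i\<in>C. \<not> vertex_cover (N+2) (C - {i})" using assms mvc_iff by auto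
  have sub: "C \<subseteq> {1..N+2}" using vc vertex_cover_def by auto
  show "N+2 \<notin> C"
  proof
    assume "N+2 \<in> C"
    have "vertex_cover (N+2) (C - {N+2})" unfolding vertex_cover_def
    proof (intro conjI allI impI)
      show "C - {N + 2} \<subseteq> {1..N + 2}" using sub by auto
      fix i assume i: "1 \<le> i \<and> i < N + 2"
      show "i \<in> C - {N + 2} \<or> Suc i \<in> C - {N + 2}"
      proof (cases "i = N+1")
        case True thus ?thesis using assms(2) by auto
      next
        case False thus ?thesis using vc i unfolding vertex_cover_def by auto
      qed
    qed
    thus False using mn \<open>N+2 \<in> C\<close> by blast
  qed
  hence sub': "C - {N+1} \<subseteq> {1..N}" using sub by (auto simp: le_Suc_eq)
  have "vertex_cover N (C - {N+1})" unfolding vertex_cover_def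
  proof (intro conjI allI impI)
    fix j assume "1 \<le> j \<and> j < N"
    thus "j \<in> C - {N+1} \<or> Suc j \<in> C - {N+1}" using vc unfolding vertex_cover_def by auto
  qed (use sub' in auto)
  moreover have "\<not> vertex_cover N (C - {N+1} - {i})" if "i \<in> C - {N+1}" for i
  proof
    assume a: "vertex_cover N (C - {N+1} - {i})"
    have "vertex_cover (N+2) (C - {i})" unfolding vertex_cover_def
    proof (intro conjI allI impI)
      show "C - {i} \<subseteq> {1..N + 2}" using sub by auto
      fix j assume j: "1 \<le> j \<and> j < N + 2"
      show "j \<in> C - {i} \<or> Suc j \<in> C - {i}"
      proof (cases "j < N")
        case True thus ?thesis using a j unfolding vertex_cover_def by auto
      next
        case False
        hence "j = N \<or> j = N+1" using j by auto
        thus ?thesis using assms(2) that by auto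
      qed
    qed
    thus False using mn that by blast
  qed
  ultimately show "min_vertex_cover N (C - {N+1})" using mvc_iff by blast
qed

lemma mvc_other:
  assumes "min_vertex_cover (M+3) C" "M+2 \<notin> C"
  shows "M+3 \<in> C" "M+1 \<in> C" "min_vertex_cover M (C - {M+3, M+1})"
proof -
  have vc: "vertex_cover (M+3) C" and mn: "\<forall>i\<in>C. \<not> vertex_cover (M+3) (C - {i})" using assms mvc_iff by auto
  have sub: "C \<subseteq> {1..M+3}" using vc vertex_cover_def by auto
  have "M+2 \<in> C \<or> Suc (M+2) \<in> C" using vc unfolding vertex_cover_def by auto
  thus c3: "M+3 \<in> C" using assms(2) by (auto simp: eval_nat_numeral)
  have "M+1 \<in> C \<or> Suc (M+1) \<in> C" using vc unfolding vertex_cover_def by auto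
  thus c1: "M+1 \<in> C" using assms(2) by auto
  have sub': "C - {M+3, M+1} \<subseteq> {1..M}"
  proof
    fix x assume x: "x \<in> C - {M+3, M+1}"
    hence "1 \<le> x \<and> x \<le> M+3" "x \<noteq> M+2" using sub assms(2) by auto
    thus "x \<in> {1..M}" using x by auto
  qed
  have "vertex_cover M (C - {M+3, M+1})" unfolding vertex_cover_def
  proof (intro conjI allI impI)
    fix j assume "1 \<le> j \<and> j < M"
    thus "j \<in> C - {M+3, M+1} \<or> Suc j \<in> C - {M+3, M+1}" using vc unfolding vertex_cover_def by auto
  qed (use sub' in auto)
  moreover have "\<not> vertex_cover M (C - {M+3, M+1} - {i})" if "i \<in> C - {M+3, M+1}" for i
  proof
    assume a: "vertex_cover M (C - {M+3, M+1} - {i})"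
    have iM: "i \<le> M" using that sub' by auto
    have "vertex_cover (M+3) (C - {i})" unfolding vertex_cover_def
    proof (intro conjI allI impI)
      show "C - {i} \<subseteq> {1..M + 3}" using sub by auto
      fix j assume j: "1 \<le> j \<and> j < M + 3"
      show "j \<in> C - {i} \<or> Suc j \<in> C - {i}"
      proof (cases "j < M")
        case True thus ?thesis using a j unfolding vertex_cover_def by auto
      next
        case False
        hence "j = M \<or> j = M+1 \<or> j = M+2" using j by auto
        thus ?thesis using c1 c3 iM by (auto simp: eval_nat_numeral)
      qed
    qed
    thus False using mn that by blast
  qed
  ultimately show "min_vertex_cover M (C - {M+3, M+1})" using mvc_iff by blast
qed

lemma mvc_small: "m \<le> 1 \<Longrightarrow> min_vertex_cover m C \<Longrightarrow> C = {}"
proof -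
  assume m: "m \<le> 1" and a: "min_vertex_cover m C"
  have "vertex_cover m {}" using m unfolding vertex_cover_def by auto
  thus "C = {}" using a unfolding min_vertex_cover_def by blast
qed


lemma rl_support: "u \<in> set (rooted_list m) \<Longrightarrow> set_mset u \<subseteq> {1..m}"
proof (induction m arbitrary: u rule: rooted_list.induct)
  case (6 k)
  then show ?case by (auto simp del: rooted_list.simps(1-5) simp add: eval_nat_numeral) fastforce+
qed (auto simp: eval_nat_numeral)

lemma rl_struct:
  assumes "N \<ge> 2"
  shows "\<exists>T. rooted_list (N+2) = map (add_mset (N+1)) (rooted_list N) @ T \<and> (\<forall>t\<in>set T. N+1 \<notin># t)"
proof (cases "N = 2")
  case True
  then show ?thesis by (auto simp: eval_nat_numeral)
next
  case False
  define k where "k = N - 3"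
  have k: "N = k + 3" using assms False unfolding k_def by auto
  have e: "N + 2 = Suc (Suc (Suc (Suc (Suc k))))" using k by simp
  show ?thesis unfolding e rooted_list.simps(6)
  proof (intro exI conjI)
    show "map (\<lambda>u. add_mset (k + 4) u) (rooted_list (k + 3)) @
          map (\<lambda>v. add_mset (k + 5) (add_mset (k + 3) v)) (rooted_list (k + 2)) =
          map (add_mset (N + 1)) (rooted_list N) @ map (\<lambda>v. add_mset (k + 5) (add_mset (k + 3) v)) (rooted_list (k + 2))"
      using k by simp
    show "\<forall>t\<in>set (map (\<lambda>v. add_mset (k + 5) (add_mset (k + 3) v)) (rooted_list (k + 2))). N + 1 \<notin># t"
      using rl_support[of _ "k+2"] k by fastforce
  qed
qed

lemma mset_set_ins: "finite C \<Longrightarrow> x \<notin> C \<Longrightarrow> mset_set (insert x C) = add_mset x (mset_set C)"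
  by simp

lemma rl_complete: "m \<ge> 2 \<Longrightarrow> min_vertex_cover m C \<Longrightarrow> mset_set C \<in> set (rooted_list m)"
proof (induction m arbitrary: C rule: less_induct)
  case (less m)
  have fin: "finite C" using less.prems vc_finite min_vertex_cover_def by blast
  show ?case
  proof (cases "m = 2")
    case True
    have vc: "vertex_cover 2 C" and mn: "\<forall>i\<in>C. \<not> vertex_cover 2 (C - {i})" using less.prems True mvc_iff by auto
    have sub: "C \<subseteq> {1,2}" using vc unfolding vertex_cover_def by auto
    have "1 \<in> C \<or> Suc 1 \<in> C" using vc unfolding vertex_cover_def by auto
    hence e: "1 \<in> C \<or> 2 \<in> C" by (simp add: numeral_2_eq_2)
    have "\<not> (1 \<in> C \<and> 2 \<in> C)"
    proof
      assume h: "1 \<in> C \<and> 2 \<in> C"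
      have "vertex_cover 2 (C - {2})" unfolding vertex_cover_def using h sub
        by (auto simp: numeral_2_eq_2 less_Suc_eq)
      thus False using mn h by blast
    qed
    hence "C = {1} \<or> C = {2}" using sub e by auto
    then show ?thesis using True by (auto simp: numeral_2_eq_2)
  next
    case False
    hence m3: "m \<ge> 3" using less.prems by auto
    show ?thesis
    proof (cases "m - 1 \<in> C")
      case True
      define N where "N = m - 2"
      have N: "m = N + 2" "N \<ge> 1" using m3 unfolding N_def by auto
      have x: "N + 1 \<in> C" using True N by simp
      have mC: "min_vertex_cover N (C - {N+1})" using mvc_del(1)[of N C] less.prems x N by simp
      have ms: "mset_set C = add_mset (N+1) (mset_set (C - {N+1}))"
        using mset_set_ins[of "C - {N+1}" "N+1"] fin x by (simp add: insert_absorb)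
      show ?thesis
      proof (cases "N = 1")
        case True
        have e0: "C - {N+1} = {}" using mvc_small mC True by blast
        have "mset_set C = {#N+1#}" using ms unfolding e0 by simp
        then show ?thesis using True N by (simp add: eval_nat_numeral)
      next
        case False
        hence N2: "N \<ge> 2" using N by auto
        have "mset_set (C - {N+1}) \<in> set (rooted_list N)" using less.IH[of N] N2 mC N by simp
        then show ?thesis using rl_struct[OF N2] ms N by auto
      qed
    next
      case False
      define M where "M = m - 3"
      have M: "m = M + 3" using m3 unfolding M_def by auto
      have nM: "M + 2 \<notin> C" using False M by simp
      note o = mvc_other[of M C, OF _ nM, unfolded M[symmetric]]
      have c3: "M+3 \<in> C" and c1: "M+1 \<in> C" and mC: "min_vertex_cover M (C - {M+3, M+1})"
        using o less.prems M by auto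
      have ms: "mset_set C = add_mset (M+3) (add_mset (M+1) (mset_set (C - {M+3, M+1})))"
      proof -
        have "C = insert (M+3) (insert (M+1) (C - {M+3, M+1}))" using c1 c3 by auto
        hence "mset_set C = mset_set (insert (M+3) (insert (M+1) (C - {M+3, M+1})))" by simp
        also have "\<dots> = add_mset (M+3) (add_mset (M+1) (mset_set (C - {M+3, M+1})))"
          using fin by simp
        finally show ?thesis .
      qed
      show ?thesis
      proof (cases "M \<le> 1")
        case True
        have e0: "C - {M+3, M+1} = {}" using mvc_small mC True by blast
        have "mset_set C = {#M+3, M+1#}" using ms unfolding e0 by simp
        then show ?thesis using True M by (cases M) (auto simp: eval_nat_numeral)
      next
        case False
        define k where "k = M - 2"
        have k: "M = k + 2" using False unfolding k_def by auto
        have e: "m = Suc (Suc (Suc (Suc (Suc k))))" using M k by simp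
        have "mset_set (C - {M+3, M+1}) \<in> set (rooted_list M)" using less.IH[of M] False mC M by simp
        hence inr: "mset_set (C - {M+3, M+1}) \<in> set (rooted_list (k+2))" using k by simp
        have ms': "mset_set C = (\<lambda>v. add_mset (k + 5) (add_mset (k + 3) v)) (mset_set (C - {M+3, M+1}))"
          using ms k by (simp add: add.commute)
        have "mset_set C \<in> (\<lambda>v. add_mset (k + 5) (add_mset (k + 3) v)) ` set (rooted_list (k+2))"
          using ms' inr by (rule image_eqI)
        then show ?thesis unfolding e rooted_list.simps(6) by simp
      qed
    qed
  qed
qed


definition exprs :: "monomial list \<Rightarrow> monomial \<Rightarrow> nat list set" where
  "exprs L M = {a. length a = length L \<and> sum_list a = 2 \<and> M = sum_list (map2 repeat_mset a L)}"

lemma expressions_exprs: "expressions m M = exprs (rooted_list m) M"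
  unfolding expressions_def exprs_def by simp

lemma E1: "length b = length Q \<Longrightarrow>
  sum_list (map2 repeat_mset b (map (add_mset x) Q)) = repeat_mset (sum_list b) {#x#} + sum_list (map2 repeat_mset b Q)"
proof (induction b Q rule: list_induct2)
  case Nil then show ?case by simp
next
  case (Cons a b q Q)
  have "repeat_mset a (add_mset x q) = repeat_mset a {#x#} + repeat_mset a q"
    by (metis add_mset_add_single repeat_mset_distrib2 add.commute)
  then show ?case using Cons by (simp add: multiset_eq_iff)
qed

lemma E2: "(\<forall>q\<in>set L. x \<notin># q) \<Longrightarrow> x \<notin># sum_list (map2 repeat_mset b L)"
proof (induction b arbitrary: L)
  case Nil then show ?case by simp
next
  case (Cons a b)
  show ?case
  proof (cases L)
    case Nil then show ?thesis by simp
  next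
    case (Cons q L')
    have "x \<notin># sum_list (map2 repeat_mset b L')" using Cons.IH[of L'] Cons.prems Cons by simp
    moreover have "x \<notin># repeat_mset a q" using Cons.prems Cons by (simp add: not_in_iff)
    ultimately show ?thesis using Cons by simp
  qed
qed

lemma E3: "(\<forall>k\<in>set c. k = 0) \<Longrightarrow> sum_list (map2 repeat_mset c T) = {#}"
proof (induction c arbitrary: T)
  case Nil then show ?case by simp
next
  case (Cons a b)
  then show ?case by (cases T) auto
qed

lemma E4:
  assumes Q: "\<forall>q\<in>set Q. x \<notin># q" and T: "\<forall>t\<in>set T. x \<notin># t"
  shows "exprs (map (add_mset x) Q @ T) (U + {#x,x#}) = (\<lambda>b. b @ replicate (length T) 0) ` exprs Q U"
proof
  show "exprs (map (add_mset x) Q @ T) (U + {#x, x#}) \<subseteq> (\<lambda>b. b @ replicate (length T) 0) ` exprs Q U"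
  proof
    fix a assume "a \<in> exprs (map (add_mset x) Q @ T) (U + {#x, x#})"
    hence len: "length a = length Q + length T" and s: "sum_list a = 2"
      and eq: "U + {#x,x#} = sum_list (map2 repeat_mset a (map (add_mset x) Q @ T))"
      unfolding exprs_def by auto
    define b where "b = take (length Q) a"
    define c where "c = drop (length Q) a"
    have ab: "a = b @ c" unfolding b_def c_def by simp
    have lb: "length b = length Q" and lc: "length c = length T" using len unfolding b_def c_def by auto
    have sbc: "sum_list b + sum_list c = 2" using s ab by simp
    have eq2: "U + {#x,x#} = repeat_mset (sum_list b) {#x#} + sum_list (map2 repeat_mset b Q) + sum_list (map2 repeat_mset c T)"
      using eq unfolding ab using lb by (simp add: zip_append E1)
    have "count (U + {#x,x#}) x = sum_list b"
    proof -
      have "count (U + {#x,x#}) x = count (repeat_mset (sum_list b) {#x#} + sum_list (map2 repeat_mset b Q) + sum_list (map2 repeat_mset c T)) x"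
        using eq2 by simp
      also have "\<dots> = sum_list b"
      proof -
        have "count (sum_list (map2 repeat_mset b Q)) x = 0" using E2[OF Q, of b] not_in_iff by metis
        moreover have "count (sum_list (map2 repeat_mset c T)) x = 0" using E2[OF T, of c] not_in_iff by metis
        ultimately show ?thesis by simp
      qed
      finally show ?thesis .
    qed
    hence "count U x + 2 = sum_list b" by simp
    hence sb: "sum_list b = 2" and sc: "sum_list c = 0" using sbc by linarith+
    have c0: "\<forall>k\<in>set c. k = 0" using sc by (simp only: sum_list_eq_0_iff)
    have crep: "c = replicate (length T) 0" using replicate_length_same[OF c0] lc by simp
    have "U + {#x,x#} = {#x,x#} + sum_list (map2 repeat_mset b Q)"
      using eq2 sb E3[OF c0, of T] by (simp add: numeral_2_eq_2)
    hence "U = sum_list (map2 repeat_mset b Q)" by (simp add: add.commute)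
    hence "b \<in> exprs Q U" unfolding exprs_def using lb sb by simp
    thus "a \<in> (\<lambda>b. b @ replicate (length T) 0) ` exprs Q U" using ab crep by blast
  qed
next
  show "(\<lambda>b. b @ replicate (length T) 0) ` exprs Q U \<subseteq> exprs (map (add_mset x) Q @ T) (U + {#x, x#})"
  proof
    fix a assume "a \<in> (\<lambda>b. b @ replicate (length T) 0) ` exprs Q U"
    then obtain b where a: "a = b @ replicate (length T) 0" and b: "b \<in> exprs Q U" by blast
    have lb: "length b = length Q" and sb: "sum_list b = 2" and U: "U = sum_list (map2 repeat_mset b Q)"
      using b unfolding exprs_def by auto
    have "sum_list (map2 repeat_mset a (map (add_mset x) Q @ T)) = repeat_mset 2 {#x#} + U"
      unfolding a using lb by (simp add: zip_append E1 E3 sb U)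
    also have "\<dots> = U + {#x,x#}" by (simp add: numeral_2_eq_2 add.commute)
    finally show "a \<in> exprs (map (add_mset x) Q @ T) (U + {#x, x#})"
      unfolding exprs_def using a lb sb by simp
  qed
qed

lemma lex_app: "length xs = length ys \<Longrightarrow> ((xs @ z) < (ys @ z)) = (xs < (ys::nat list))"
proof (induction xs ys rule: list_induct2)
  case Nil then show ?case by simp
next
  case (Cons a xs b ys) then show ?case by simp
qed

lemma Max_app:
  assumes "finite E" "E \<noteq> {}" "\<forall>b\<in>E. length b = L"
  shows "Max ((\<lambda>b. b @ z) ` E) = Max E @ (z::nat list)"
proof (rule Max_eqI)
  show "finite ((\<lambda>b. b @ z) ` E)" using assms by simp
  have mE: "Max E \<in> E" using assms by simp
  show "Max E @ z \<in> (\<lambda>b. b @ z) ` E" using mE by blast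
  fix y assume "y \<in> (\<lambda>b. b @ z) ` E"
  then obtain b where y: "y = b @ z" and b: "b \<in> E" by blast
  have "b \<le> Max E" using assms b by simp
  hence "b = Max E \<or> b < Max E" by auto
  thus "y \<le> Max E @ z"
  proof
    assume "b < Max E"
    hence "b @ z < Max E @ z" using lex_app[of b "Max E" z] assms(3) b mE by simp
    thus ?thesis using y by simp
  qed (use y in simp)
qed

lemma exprs_finite: "finite (exprs L M)"
proof (rule finite_subset)
  show "exprs L M \<subseteq> {xs. set xs \<subseteq> {0..2} \<and> length xs = length L}"
    unfolding exprs_def using member_le_sum_list by fastforce
  show "finite {xs. set xs \<subseteq> {0..2::nat} \<and> length xs = length L}"
    by (rule finite_lists_length_eq) simp
qed

lemma map2_idx: "sum_list (map2 repeat_mset (map f [0..<length L]) L) = (\<Sum>k<length L. repeat_mset (f k) (L!k))"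
proof -
  have "map2 repeat_mset (map f [0..<length L]) L = map (\<lambda>k. repeat_mset (f k) (L!k)) [0..<length L]"
    by (rule nth_equalityI) auto
  thus ?thesis by (simp add: sum_list_map_eq_sum_count atLeast0LessThan[symmetric] sum_set_upt_conv_sum_list_nat[symmetric])
qed

lemma exprs_nonempty:
  assumes "u \<in> set L" "v \<in> set L"
  shows "exprs L (u + v) \<noteq> {}"
proof -
  obtain i where i: "i < length L" "L!i = u" using assms in_set_conv_nth by metis
  obtain j where j: "j < length L" "L!j = v" using assms in_set_conv_nth by metis
  define f where "f = (\<lambda>k. (if k = i then 1 else 0) + (if k = j then 1 else (0::nat)))"
  define a where "a = map f [0..<length L]"
  have "sum_list a = (\<Sum>k<length L. f k)" unfolding a_def
    by (simp add: atLeast0LessThan[symmetric] sum_set_upt_conv_sum_list_nat[symmetric])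
  also have "\<dots> = 2" unfolding f_def using i j by (simp add: sum.distrib)
  finally have s: "sum_list a = 2" .
  have "sum_list (map2 repeat_mset a L) = (\<Sum>k<length L. repeat_mset (f k) (L!k))"
    unfolding a_def by (rule map2_idx)
  also have "\<dots> = (\<Sum>k<length L. (if k = i then L!k else {#}) + (if k = j then L!k else {#}))"
    unfolding f_def by (intro sum.cong) (auto simp: repeat_mset_distrib)
  also have "\<dots> = u + v" using i j by (simp add: sum.distrib)
  finally have "a \<in> exprs L (u + v)" unfolding exprs_def a_def using s a_def by simp
  thus ?thesis by blast
qed


lemma F2_iff:
  assumes "N \<ge> 2"
  shows "U \<in> F2 N \<longleftrightarrow> U + {#N+1, N+1#} \<in> F2 (N+2)"
proof
  assume "U \<in> F2 N"
  then obtain C1 C2 where U: "U = mset_set C1 + mset_set C2" and c1: "min_vertex_cover N C1" and c2: "min_vertex_cover N C2"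
    unfolding F2_def Gens_def by blast
  have s1: "C1 \<subseteq> {1..N}" "finite C1" using c1 unfolding min_vertex_cover_def vertex_cover_def by (auto intro: finite_subset)
  have s2: "C2 \<subseteq> {1..N}" "finite C2" using c2 unfolding min_vertex_cover_def vertex_cover_def by (auto intro: finite_subset)
  have "mset_set (insert (N+1) C1) = add_mset (N+1) (mset_set C1)" using s1 by (auto intro: mset_set_ins)
  moreover have "mset_set (insert (N+1) C2) = add_mset (N+1) (mset_set C2)" using s2 by (auto intro: mset_set_ins)
  ultimately have "U + {#N+1, N+1#} = mset_set (insert (N+1) C1) + mset_set (insert (N+1) C2)"
    using U by simp
  moreover have "mset_set (insert (N+1) C1) \<in> Gens (N+2)" "mset_set (insert (N+1) C2) \<in> Gens (N+2)"
    unfolding Gens_def using mvc_ins c1 c2 by blast+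
  ultimately show "U + {#N+1, N+1#} \<in> F2 (N+2)" unfolding F2_def by blast
next
  assume "U + {#N+1, N+1#} \<in> F2 (N+2)"
  then obtain C1 C2 where U: "U + {#N+1, N+1#} = mset_set C1 + mset_set C2" and c1: "min_vertex_cover (N+2) C1" and c2: "min_vertex_cover (N+2) C2"
    unfolding F2_def Gens_def by blast
  have f1: "finite C1" and f2: "finite C2" using c1 c2 vc_finite min_vertex_cover_def by blast+
  have "count (U + {#N+1, N+1#}) (N+1) = count (mset_set C1 + mset_set C2) (N+1)" using U by simp
  hence "count U (N+1) + 2 = (if N+1 \<in> C1 then 1 else 0) + (if N+1 \<in> C2 then 1 else 0)"
    using f1 f2 by (simp add: count_mset_set)
  hence x1: "N+1 \<in> C1" and x2: "N+1 \<in> C2" by (auto split: if_splits)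
  have m1: "mset_set C1 = add_mset (N+1) (mset_set (C1 - {N+1}))"
    using mset_set_ins[of "C1 - {N+1}" "N+1"] f1 x1 by (simp add: insert_absorb)
  have m2: "mset_set C2 = add_mset (N+1) (mset_set (C2 - {N+1}))"
    using mset_set_ins[of "C2 - {N+1}" "N+1"] f2 x2 by (simp add: insert_absorb)
  have "U = mset_set (C1 - {N+1}) + mset_set (C2 - {N+1})" using U unfolding m1 m2 by simp
  moreover have "mset_set (C1 - {N+1}) \<in> Gens N" "mset_set (C2 - {N+1}) \<in> Gens N"
    unfolding Gens_def using mvc_del(1) c1 c2 x1 x2 by blast+
  ultimately show "U \<in> F2 N" unfolding F2_def by blast
qed

lemma F2_exprs_ne:
  assumes "N \<ge> 2" "U \<in> F2 N"
  shows "expressions N U \<noteq> {}"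
proof -
  obtain C1 C2 where U: "U = mset_set C1 + mset_set C2" and c1: "min_vertex_cover N C1" and c2: "min_vertex_cover N C2"
    using assms(2) unfolding F2_def Gens_def by blast
  show ?thesis unfolding expressions_exprs U
    using exprs_nonempty rl_complete assms(1) c1 c2 by blast
qed

lemma maxexp_shift:
  assumes "N \<ge> 2" "U \<in> F2 N"
  obtains z where "max_expression (N+2) (U + {#N+1, N+1#}) = max_expression N U @ z"
    and "z = replicate (length (rooted_list (N+2)) - length (rooted_list N)) 0"
    and "length (max_expression N U) = length (rooted_list N)"
proof -
  obtain T where R: "rooted_list (N+2) = map (add_mset (N+1)) (rooted_list N) @ T" and T: "\<forall>t\<in>set T. N+1 \<notin># t"
    using rl_struct[OF assms(1)] by blast
  have Q: "\<forall>q\<in>set (rooted_list N). N+1 \<notin># q" using rl_support by fastforce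
  have E: "expressions (N+2) (U + {#N+1, N+1#}) = (\<lambda>b. b @ replicate (length T) 0) ` expressions N U"
    unfolding expressions_exprs R using E4[OF Q T] by simp
  have ne: "expressions N U \<noteq> {}" using F2_exprs_ne assms by blast
  have fin: "finite (expressions N U)" unfolding expressions_exprs by (rule exprs_finite)
  have len: "\<forall>b\<in>expressions N U. length b = length (rooted_list N)" unfolding expressions_exprs exprs_def by simp
  have "max_expression (N+2) (U + {#N+1, N+1#}) = max_expression N U @ replicate (length T) 0"
    unfolding max_expression_def E by (rule Max_app[OF fin ne len])
  moreover have "length T = length (rooted_list (N+2)) - length (rooted_list N)" using R by simp
  moreover have "length (max_expression N U) = length (rooted_list N)"
    unfolding max_expression_def using len Max_in[OF fin ne] by blast
  ultimately show ?thesis using that by simp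
qed

theorem lemma3p3:
  fixes n :: nat and U V :: monomial
  assumes "n \<ge> 4"
  shows "((U \<in> F2 (n - 2) \<and> V \<in> F2 (n - 2)) \<longleftrightarrow>
           (U + {#n - 1, n - 1#} \<in> F2 n \<and> V + {#n - 1, n - 1#} \<in> F2 n)) \<and>
         (U \<in> F2 (n - 2) \<and> V \<in> F2 (n - 2) \<longrightarrow>
           (rooted_gt (n - 2) U V \<longleftrightarrow>
            rooted_gt n (U + {#n - 1, n - 1#}) (V + {#n - 1, n - 1#})))"
proof -
  define N where "N = n - 2"
  have N2: "N \<ge> 2" and n: "n = N + 2" and n1: "n - 1 = N + 1" using assms unfolding N_def by auto
  show ?thesis unfolding n1 N_def[symmetric] unfolding n
  proof (intro conjI impI)
    show "(U \<in> F2 N \<and> V \<in> F2 N) = (U + {#N + 1, N + 1#} \<in> F2 (N + 2) \<and> V + {#N + 1, N + 1#} \<in> F2 (N + 2))"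
      using F2_iff[OF N2] by blast
    assume h: "U \<in> F2 N \<and> V \<in> F2 N"
    obtain zU where zU: "max_expression (N+2) (U + {#N+1, N+1#}) = max_expression N U @ zU"
      "zU = replicate (length (rooted_list (N+2)) - length (rooted_list N)) 0"
      "length (max_expression N U) = length (rooted_list N)"
      using maxexp_shift[OF N2] h by blast
    obtain zV where zV: "max_expression (N+2) (V + {#N+1, N+1#}) = max_expression N V @ zV"
      "zV = replicate (length (rooted_list (N+2)) - length (rooted_list N)) 0"
      "length (max_expression N V) = length (rooted_list N)"
      using maxexp_shift[OF N2] h by blast
    show "rooted_gt N U V = rooted_gt (N + 2) (U + {#N + 1, N + 1#}) (V + {#N + 1, N + 1#})"
      unfolding rooted_gt_def zU(1) zV(1) zV(2) zU(2)
      using lex_app zU(3) zV(3) by simp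
  qed
qed

end
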